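(* Let $n,m,k\in\mathbb{N}_0$ with $n,k>0$ and $n>k\ge m$, and let $r,s,p\in\mathbb{R}$ with $r>s$ and $r>p$. Then \[ \int_0^\infty \frac{x^n\,e^{(mr+(k-m)s+p)x}}{(e^{rx}-e^{sx})^{k+1}}\,dx =\frac{1}{(r-s)^{n+1}}\,\frac{n!}{k!}\sum_{i=0}^{k}\sum_{j=0}^{k-i}(-1)^{k+i}\binom{i+j}{j}S_k^{(i+j)}\left(k-m+\frac{s-p}{r-s}\right)^{j}\zeta\!\left(n+1-i,\frac{r-p}{r-s}\right), \] and this quantity also equals \[ \frac{n!}{(r-s)^{n+1}}\sum_{i=0}^{k} q_{k+1,i}\!\left(k-m+\frac{r-p}{r-s}\right)\zeta\!\left(n+1-i,\frac{r-p}{r-s}\right). \]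
   Context: $S_k^{(l)}$ denotes the (signed) Stirling numbers of the first kind, defined by $x(x-1)\cdots(x-k+1)=\sum_{l=0}^{k}S_k^{(l)}x^l$ (so e.g. $S_2^{(1)}=-1$). $\zeta(s,a)=\sum_{l=0}^\infty (l+a)^{-s}$ is the Hurwitz zeta function. For $N\in\mathbb{N}$, $0\le j\le N-1$ and $a\in\mathbb{R}$, the coefficients are \[ q_{N,j}(a)=\frac{1}{(N-1)!}\sum_{l=j}^{N-1}(-1)^{N+l-1}\binom{l}{j}S_{N-1}^{(l)}(1-a)^{l-j}. \] *)

theory Defs
  imports "HOL-Analysis.Analysis" "HOL-Computational_Algebra.Polynomial"
begin

definition stirling1_signed :: "nat \<Rightarrow> nat \<Rightarrow> int" where
  "stirling1_signed k l = coeff (\<Prod>i<k. [:- of_nat i, 1:]) l"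

definition hurwitz_zeta_real :: "real \<Rightarrow> real \<Rightarrow> real" where
  "hurwitz_zeta_real s a = (\<Sum>l. (real l + a) powr (- s))"

definition q_coeff :: "nat \<Rightarrow> nat \<Rightarrow> real \<Rightarrow> real" where
  "q_coeff N j a = (1 / fact (N - 1)) *
     (\<Sum>l = j..N - 1. (-1) ^ (N + l - 1) * real (l choose j)
        * of_int (stirling1_signed (N - 1) l) * (1 - a) ^ (l - j))"

end

theory Submission
  imports Defs "HOL-Analysis.Analysis"
begin


lemma stirling_coeff_zero:
  assumes "l > k" shows "stirling1_signed k l = 0"
proof -
  have "degree (\<Prod>i<k. [:- of_nat i, 1:] :: int poly) \<le> (\<Sum>i<k. degree ([:- of_nat i, 1:] :: int poly))"
    by (rule order_trans[OF degree_prod_sum_le]) (auto simp: o_def)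
  also have "\<dots> = k" by simp
  finally show ?thesis using assms unfolding stirling1_signed_def by (intro coeff_eq_0) simp
qed

lemma stirling_expand:
  "(\<Prod>i<k. (y::real) - of_nat i) = (\<Sum>l\<le>k. of_int (stirling1_signed k l) * y^l)"
proof (induction k)
  case 0
  then show ?case by (simp add: stirling1_signed_def)
next
  case (Suc k)
  have P: "(\<Prod>i<Suc k. [:- of_nat i, 1:] :: int poly) = smult (- of_nat k) (\<Prod>i<k. [:- of_nat i, 1:]) + pCons 0 (\<Prod>i<k. [:- of_nat i, 1:])"
    by (simp add: mult_pCons_right)
  have c: "stirling1_signed (Suc k) l = - of_nat k * stirling1_signed k l + (case l of 0 \<Rightarrow> 0 | Suc l' \<Rightarrow> stirling1_signed k l')" for l
    unfolding stirling1_signed_def P by (cases l) auto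
  have "(\<Sum>l\<le>Suc k. of_int (stirling1_signed (Suc k) l) * y^l) =
     - of_nat k * (\<Sum>l\<le>Suc k. of_int (stirling1_signed k l) * y^l) + (\<Sum>l\<le>Suc k. of_int (case l of 0 \<Rightarrow> 0 | Suc l' \<Rightarrow> stirling1_signed k l') * y^l)"
    by (simp only: sum_distrib_left sum.distrib[symmetric]) (intro sum.cong refl, simp add: c algebra_simps)
  also have "(\<Sum>l\<le>Suc k. of_int (stirling1_signed k l) * y^l) = (\<Sum>l\<le>k. of_int (stirling1_signed k l) * y^l)"
    by (simp add: stirling_coeff_zero)
  also have "(\<Sum>l\<le>Suc k. of_int (case l of 0 \<Rightarrow> 0 | Suc l' \<Rightarrow> stirling1_signed k l') * y^l) = y * (\<Sum>l\<le>k. of_int (stirling1_signed k l) * y^l)"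
    by (subst sum.atMost_Suc_shift) (simp add: sum_distrib_left algebra_simps)
  finally show ?case using Suc.IH by (simp add: algebra_simps)
qed

lemma swap_tri: fixes k :: nat shows "(\<Sum>l\<le>k. \<Sum>i\<le>l. F l i) = (\<Sum>i\<le>k. \<Sum>l=i..k. F l i :: real)"
proof (induction k)
  case 0 then show ?case by simp
next
  case (Suc k)
  have "(\<Sum>i\<le>Suc k. \<Sum>l=i..Suc k. F l i) = (\<Sum>i\<le>k. \<Sum>l=i..Suc k. F l i) + F (Suc k) (Suc k)"
    by simp
  also have "(\<Sum>i\<le>k. \<Sum>l=i..Suc k. F l i) = (\<Sum>i\<le>k. (\<Sum>l=i..k. F l i) + F (Suc k) i)"
    by (intro sum.cong refl) (simp add: atLeastAtMostSuc_conv)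
  finally show ?case using Suc.IH by (simp add: sum.distrib)
qed

definition Ecoef :: "nat \<Rightarrow> real \<Rightarrow> nat \<Rightarrow> real" where
  "Ecoef k b i = (\<Sum>l=i..k. (-1)^(k+i) * real (l choose i) * of_int (stirling1_signed k l) * b^(l-i))"

lemma poly_expand:
  "(\<Prod>j<k. t - b + real j) = (\<Sum>i\<le>k. Ecoef k b i * t^i)"
proof -
  have "(\<Prod>j<k. t - b + real j) = (\<Prod>j<k. (-1) * ((b - t) - real j))"
    by (intro prod.cong refl) simp
  also have "\<dots> = (-1)^k * (\<Prod>j<k. (b - t) - real j)"
    unfolding prod.distrib by simp
  also have "\<dots> = (-1)^k * (\<Sum>l\<le>k. of_int (stirling1_signed k l) * (b - t)^l)"
    by (simp add: stirling_expand)
  also have "\<dots> = (\<Sum>l\<le>k. \<Sum>i\<le>l. (-1)^(k+i) * real (l choose i) * of_int (stirling1_signed k l) * b^(l-i) * t^i)"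
  proof -
    have "(b - t)^l = (\<Sum>i\<le>l. real (l choose i) * (-t)^i * b^(l-i))" for l
      using binomial_ring[of "-t" b l] by simp
    then show ?thesis
      by (simp add: sum_distrib_left power_add power_minus[of t] algebra_simps)
  qed
  also have "\<dots> = (\<Sum>i\<le>k. \<Sum>l=i..k. (-1)^(k+i) * real (l choose i) * of_int (stirling1_signed k l) * b^(l-i) * t^i)"
    by (rule swap_tri)
  also have "\<dots> = (\<Sum>i\<le>k. Ecoef k b i * t^i)"
    by (simp add: Ecoef_def sum_distrib_right)
  finally show ?thesis .
qed

lemma zeta_sums:
  assumes "a > 0" "q \<ge> 2"
  shows "(\<lambda>j. 1 / (real j + a)^q) sums hurwitz_zeta_real (real q) a"
proof -
  have eq: "(real j + a) powr (- real q) = 1 / (real j + a)^q" for j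
    using assms by (simp add: powr_minus powr_realpow divide_inverse)
  have "summable (\<lambda>j. 1 / (real j + a)^q)"
  proof (rule summable_comparison_test'[where N=1])
    show "summable (\<lambda>j. inverse (real j ^ q))"
      by (rule inverse_power_summable) (use assms in auto)
    fix j :: nat assume j: "j \<ge> 1"
    have "real j ^ q \<le> (real j + a)^q" by (rule power_mono) (use assms in auto)
    then have "1 / (real j + a)^q \<le> 1 / real j ^ q"
      using j assms by (intro divide_left_mono) (auto intro!: mult_pos_pos)
    then show "norm (1 / (real j + a)^q) \<le> inverse (real j ^ q)"
      using assms by (simp add: divide_inverse)
  qed
  then show ?thesis unfolding hurwitz_zeta_real_def eq by (simp add: summable_sums)
qed

lemma poch_choose: "(\<Prod>t<k. real l + 1 + real t) = fact k * real ((l+k) choose k)"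
proof (induction k)
  case 0 then show ?case by simp
next
  case (Suc k)
  have "real (Suc (l+k)) * real ((l+k) choose k) = real ((Suc (l+k)) choose (Suc k)) * real (Suc k)"
    by (metis of_nat_mult Suc_times_binomial_eq)
  then show ?case using Suc.IH by (simp add: algebra_simps)
qed

lemma series_value:
  fixes a :: real and K k n :: nat
  assumes "a > 0" "K \<le> k" "k < n"
  shows "(\<lambda>l. real ((l+k) choose k) / (real l + real K + a)^(n+1)) sums
     ((1/fact k) * (\<Sum>i\<le>k. Ecoef k (real K + a - 1) i * hurwitz_zeta_real (real (n+1-i)) a))"
proof -
  define b where "b = real K + a - 1"
  define h where "h j = (\<Sum>i\<le>k. Ecoef k b i * (1/(real j + a)^(n+1-i)))" for j
  have hs: "h sums (\<Sum>i\<le>k. Ecoef k b i * hurwitz_zeta_real (real (n+1-i)) a)"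
    unfolding h_def by (intro sums_sum sums_mult zeta_sums) (use assms in auto)
  have hQ: "h j = (\<Prod>t<k. real j + a - b + real t) / (real j + a)^(n+1)" for j
  proof -
    have pos: "real j + a > 0" using assms by simp
    have "(\<Prod>t<k. real j + a - b + real t) = (\<Sum>i\<le>k. Ecoef k b i * (real j + a)^i)"
      by (rule poly_expand)
    then have "(\<Prod>t<k. real j + a - b + real t) / (real j + a)^(n+1)
       = (\<Sum>i\<le>k. Ecoef k b i * ((real j + a)^i / (real j + a)^(n+1)))"
      by (simp add: sum_divide_distrib)
    also have "\<dots> = h j" unfolding h_def
    proof (intro sum.cong refl)
      fix i assume "i \<in> {..k}"
      then have "i \<le> n+1" using assms by simp
      then have "(real j + a)^(n+1) = (real j + a)^(n+1-i) * (real j + a)^i"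
        by (simp add: power_add[symmetric])
      then show "Ecoef k b i * ((real j + a)^i / (real j + a)^(n+1)) = Ecoef k b i * (1/(real j + a)^(n+1-i))"
        using pos by simp
    qed
    finally show ?thesis by simp
  qed
  have hz: "h j = 0" if "j < K" for j
  proof -
    have "real j + a - b + real (K - j - 1) = 0" using that by (simp add: of_nat_diff b_def)
    moreover have "K - j - 1 < k" using that assms by simp
    ultimately have "(\<Prod>t<k. real j + a - b + real t) = 0" by (intro prod_zero) auto
    then show ?thesis by (simp add: hQ)
  qed
  have "(\<lambda>l. h (l + K)) sums (\<Sum>i\<le>k. Ecoef k b i * hurwitz_zeta_real (real (n+1-i)) a)"
    using sums_split_initial_segment[OF hs, of K] hz by simp
  moreover have "h (l + K) = fact k * (real ((l+k) choose k) / (real l + real K + a)^(n+1))" for l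
  proof -
    have "(\<Prod>t<k. real (l + K) + a - b + real t) = (\<Prod>t<k. real l + 1 + real t)"
      by (intro prod.cong refl) (simp add: b_def)
    then have e: "(\<Prod>t<k. real (l + K) + a - b + real t) = fact k * real ((l+k) choose k)"
      using poch_choose[where k=k and l=l] by simp
    show ?thesis by (simp only: hQ e) (simp add: add_ac)
  qed
  ultimately have "(\<lambda>l. fact k * (real ((l+k) choose k) / (real l + real K + a)^(n+1))) sums
       (\<Sum>i\<le>k. Ecoef k b i * hurwitz_zeta_real (real (n+1-i)) a)" by simp
  from sums_divide[OF this, of "fact k"] show ?thesis by (simp add: b_def)
qed

lemma exp_moment:
  fixes b :: real assumes b: "b > 0"
  shows "((\<lambda>x. x^n * exp (-(b*x))) has_integral fact n / b^(n+1)) {0<..}"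
proof -
  have "((\<lambda>t. t powr (real (Suc n) - 1) / exp t) has_integral Gamma (real (Suc n))) {0..}"
    by (rule Gamma_integral_real) simp
  hence "((\<lambda>t. if t \<in> {0<..} then t powr (real (Suc n) - 1) / exp t else 0)
           has_integral Gamma (real (Suc n))) {0..}"
    by (rule has_integral_spike [of "{0}", rotated 2]) auto
  hence H: "((\<lambda>t. t powr (real (Suc n) - 1) / exp t) has_integral Gamma (real (Suc n))) {0<..}"
    by (subst (asm) has_integral_restrict) auto
  have G: "Gamma (real (Suc n)) = fact n" using Gamma_fact[of n] by (simp add: add.commute)
  have A: "((\<lambda>t::real. t ^ n / exp t) has_integral fact n) {0<..}"
    using H unfolding G apply (elim has_integral_eq[rotated]) by (simp add: powr_realpow)
  have Aabs: "(\<lambda>t::real. t ^ n / exp t) absolutely_integrable_on {0<..}"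
    using A by (intro nonnegative_absolutely_integrable_1) (auto simp: has_integral_integrable)
  have img: "(\<lambda>x. b * x) ` {0<..} = ({0<..}::real set)"
  proof (auto simp: b)
    fix x :: real assume "x > 0"
    then show "x \<in> (\<lambda>x. b * x) ` {0<..}"
      using b by (intro image_eqI[of _ _ "x / b"]) auto
  qed
  have der: "((\<lambda>x. b * x) has_field_derivative b) (at x within {0<..})" for x
    by (auto intro!: derivative_eq_intros)
  have inj: "inj_on (\<lambda>x. b * x) ({0<..}::real set)" using b by (auto simp: inj_on_def)
  have "(\<lambda>x. \<bar>b\<bar> * ((b * x) ^ n / exp (b * x))) absolutely_integrable_on {0<..} \<and>
        integral {0<..} (\<lambda>x. \<bar>b\<bar> * ((b * x) ^ n / exp (b * x))) = fact n"
    using has_absolute_integral_change_of_variables_1'[of "{0<..}" "\<lambda>x. b * x" "\<lambda>_. b" "\<lambda>t. t ^ n / exp t" "fact n", OF _ der inj]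
    Aabs A by (simp add: img integral_unique)
  hence B: "((\<lambda>x. \<bar>b\<bar> * ((b * x) ^ n / exp (b * x))) has_integral fact n) {0<..}"
    using absolutely_integrable_on_def has_integral_integral by metis
  have C: "((\<lambda>x. \<bar>b\<bar> * ((b * x) ^ n / exp (b * x)) * (1 / b^(n+1))) has_integral fact n * (1 / b^(n+1))) {0<..}"
    by (rule has_integral_mult_left[OF B])
  show ?thesis
    using C unfolding times_divide_eq_right mult_1_right
    apply (elim has_integral_eq[rotated])
    using b by (simp add: power_mult_distrib exp_minus field_simps)
qed



lemma neg_binom_series:
  fixes y :: real assumes "0 \<le> y" "y < 1"
  shows "(\<lambda>l. real ((l+k) choose k) * y^l) sums (1 / (1 - y)^(k+1))"
proof -
  have "(\<lambda>l. ((- real (Suc k)) gchoose l) * (-y)^l) sums (1 + -y) powr (- real (Suc k))"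
    by (rule gen_binomial_real) (use assms in auto)
  moreover have "((- real (Suc k)) gchoose l) * (-y)^l = real ((l+k) choose k) * y^l" for l
  proof -
    have "((- real (Suc k)) gchoose l) = (-1)^l * (real (l + k) gchoose l)"
      by (subst gbinomial_minus) (simp add: algebra_simps)
    also have "real (l + k) gchoose l = real ((l+k) choose l)"
      by (simp add: binomial_gbinomial)
    also have "(l+k) choose l = (l+k) choose k"
      by (subst binomial_symmetric) auto
    finally have eq: "((- real (Suc k)) gchoose l) = (-1)^l * real ((l+k) choose k)" .
    have m1: "(-1::real)^l * (-1)^l = 1" by (simp flip: power_mult_distrib)
    have "((- real (Suc k)) gchoose l) * (-y)^l = ((-1)^l * (-1)^l) * (real ((l+k) choose k) * y^l)"
      unfolding eq power_minus[of y] by (simp only: mult_ac)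
    then show ?thesis unfolding m1 by simp
  qed
  moreover have "(1 + -y) powr (- real (Suc k)) = 1 / (1 - y)^(k+1)"
  proof -
    have "(1 + -y) powr (- real (Suc k)) = inverse ((1-y) powr real (Suc k))"
      using powr_minus[of "1-y" "real (Suc k)"] by simp
    also have "(1-y) powr real (Suc k) = (1-y)^(Suc k)"
      by (rule powr_realpow) (use assms in simp)
    finally show ?thesis by (simp add: divide_inverse)
  qed
  ultimately show ?thesis by simp
qed


lemma Ecoef_alt:
  assumes "i \<le> k"
  shows "Ecoef k b i = (\<Sum>j=0..k-i. (-1)^(k+i) * real ((i+j) choose j) * of_int (stirling1_signed k (i+j)) * b^j)"
proof -
  have "Ecoef k b i = (\<Sum>l=0+i..(k-i)+i. (-1)^(k+i) * real (l choose i) * of_int (stirling1_signed k l) * b^(l-i))"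
    using assms by (simp add: Ecoef_def)
  also have "\<dots> = (\<Sum>j=0..k-i. (-1)^(k+i) * real ((j+i) choose i) * of_int (stirling1_signed k (j+i)) * b^(j+i-i))"
    by (rule sum.shift_bounds_cl_nat_ivl)
  also have "\<dots> = (\<Sum>j=0..k-i. (-1)^(k+i) * real ((i+j) choose j) * of_int (stirling1_signed k (i+j)) * b^j)"
  proof (intro sum.cong refl)
    fix j
    have "(j+i) choose i = (i+j) choose j" by (subst binomial_symmetric) (auto simp: add.commute)
    then show "(-1)^(k+i) * real ((j+i) choose i) * of_int (stirling1_signed k (j+i)) * b^(j+i-i) =
      (-1)^(k+i) * real ((i+j) choose j) * of_int (stirling1_signed k (i+j)) * b^j"
      by (simp add: add.commute)
  qed
  finally show ?thesis .
qed


lemma q_alt: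
  assumes "i \<le> k"
  shows "q_coeff (k+1) i c = Ecoef k (c - 1) i / fact k"
proof -
  have "(-1)^(k + 1 + l - 1) * real (l choose i) * of_int (stirling1_signed k l) * (1 - c)^(l-i)
      = (-1)^(k+i) * real (l choose i) * of_int (stirling1_signed k l) * (c - 1)^(l-i)"
    (is "?L l = ?R l") if "l \<in> {i..k}" for l
  proof -
    have li: "i \<le> l" using that by simp
    have pw: "(1 - c)^(l-i) = (-1)^(l-i) * (c-1)^(l-i)"
      by (simp flip: power_mult_distrib)
    have sg: "(-1::real)^(k + 1 + l - 1) * (-1)^(l-i) = (-1)^(k+i)"
    proof -
      have "k + 1 + l - 1 + (l - i) = (k + i) + 2 * (l - i)" using li by simp
      then have "(-1::real)^(k + 1 + l - 1) * (-1)^(l-i) = (-1)^((k + i) + 2 * (l - i))"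
        by (simp only: power_add[symmetric])
      then show ?thesis by (simp add: power_add power_mult)
    qed
    have "?L l = ((-1)^(k + 1 + l - 1) * (-1)^(l-i)) * (real (l choose i) * of_int (stirling1_signed k l) * (c - 1)^(l-i))"
      unfolding pw by (simp only: mult_ac)
    also have "\<dots> = ?R l" unfolding sg by (simp only: mult_ac)
    finally show ?thesis .
  qed
  then have S: "(\<Sum>l=i..k. ?L l) = (\<Sum>l=i..k. ?R l)" by (rule sum.cong[OF refl])
  have "q_coeff (k+1) i c = 1 / fact k * (\<Sum>l=i..k. ?L l)"
    unfolding q_coeff_def by simp
  also have "\<dots> = Ecoef k (c - 1) i / fact k"
    unfolding S Ecoef_def by simp
  finally show ?thesis .
qed


theorem mainTheorem1:
  fixes n m k :: nat and r s p :: real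
  assumes "n > 0" "k > 0" "n > k" "k \<ge> m" "r > s" "r > p"
  defines "I \<equiv> integral {0<..} (\<lambda>x::real. x ^ n * exp ((real m * r + (real k - real m) * s + p) * x)
                   / (exp (r * x) - exp (s * x)) ^ (k + 1))"
  shows "((\<lambda>x::real. x ^ n * exp ((real m * r + (real k - real m) * s + p) * x)
                   / (exp (r * x) - exp (s * x)) ^ (k + 1)) integrable_on {0<..})
    \<and> I = 1 / (r - s) ^ (n + 1) * (fact n / fact k) *
          (\<Sum>i = 0..k. \<Sum>j = 0..k - i. (-1) ^ (k + i) * real ((i + j) choose j)
             * of_int (stirling1_signed k (i + j))
             * (real k - real m + (s - p) / (r - s)) ^ j
             * hurwitz_zeta_real (real (n + 1 - i)) ((r - p) / (r - s)))
    \<and> I = fact n / (r - s) ^ (n + 1) *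
          (\<Sum>i = 0..k. q_coeff (k + 1) i (real k - real m + (r - p) / (r - s))
             * hurwitz_zeta_real (real (n + 1 - i)) ((r - p) / (r - s)))"
proof -
  define d where "d = r - s"
  define a where "a = (r - p) / (r - s)"
  define K where "K = k - m"
  define c where "c = real K + a"
  define E where "E = real m * r + (real k - real m) * s + p"
  have d: "d > 0" using assms by (simp add: d_def)
  have a: "a > 0" using assms by (simp add: a_def)
  have c: "c > 0" using a by (simp add: c_def)
  have RK: "real K = real k - real m" using assms by (simp add: K_def of_nat_diff)
  define f where "f = (\<lambda>x::real. x ^ n * exp ((real m * r + (real k - real m) * s + p) * x)
                   / (exp (r * x) - exp (s * x)) ^ (k + 1))"
  define u where "u l x = real ((l+k) choose k) * (x^n * exp (- (((real l + c) * d) * x)))" for l x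
  define g where "g N x = (\<Sum>l<N. u l x)" for N x
  define Z where "Z = (1/fact k) * (\<Sum>i\<le>k. Ecoef k (real K + a - 1) i * hurwitz_zeta_real (real (n+1-i)) a)"
  have ser: "(\<lambda>l. real ((l+k) choose k) / (real l + real K + a)^(n+1)) sums Z"
    unfolding Z_def by (rule series_value) (use a assms in \<open>auto simp: K_def\<close>)
  have ptw: "(\<lambda>l. u l x) sums f x" if x: "x > 0" for x
  proof -
    define y where "y = exp (-(d*x))"
    have y: "0 \<le> y" "y < 1" using d x by (simp_all add: y_def)
    have "(\<lambda>l. x^n * exp (-(c*d*x)) * (real ((l+k) choose k) * y^l)) sums (x^n * exp(-(c*d*x)) * (1/(1-y)^(k+1)))"
      by (rule sums_mult[OF neg_binom_series[OF y]])
    moreover have "x^n * exp(-(c*d*x)) * (real ((l+k) choose k) * y^l) = u l x" for l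
    proof -
      have "y^l = exp (real l * (-(d*x)))" unfolding y_def by (simp only: exp_of_nat_mult)
      moreover have "-(((real l + c) * d) * x) = -(c*d*x) + real l * (-(d*x))" by (simp add: algebra_simps)
      ultimately show ?thesis unfolding u_def by (simp only: exp_add) (simp add: mult_ac)
    qed
    moreover have "x^n * exp(-(c*d*x)) * (1/(1-y)^(k+1)) = f x"
    proof -
      have e1: "exp (s*x) = exp (r*x) * y" unfolding y_def d_def
        by (simp flip: exp_add add: algebra_simps)
      have e2: "exp (r*x)^(k+1) = exp (real (k+1) * (r*x))" by (rule exp_of_nat_mult[symmetric])
      have arg: "E*x - real (k+1) * (r*x) = -(c*d*x)"
        unfolding c_def a_def d_def RK E_def using assms by (simp add: field_simps)
      have e3: "exp (E*x) / exp (r*x)^(k+1) = exp (-(c*d*x))"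
        unfolding e2 exp_diff[symmetric] arg ..
      have "f x = x^n * exp (E*x) / (exp (r*x)^(k+1) * (1-y)^(k+1))"
        unfolding f_def E_def e1 by (simp add: algebra_simps flip: power_mult_distrib)
      also have "\<dots> = x^n * (exp (E*x) / exp (r*x)^(k+1)) * (1/(1-y)^(k+1))"
        by simp
      finally show ?thesis unfolding e3 by simp
    qed
    ultimately show ?thesis by simp
  qed
  have ui: "(u l has_integral real ((l+k) choose k) * (fact n / ((real l + c)*d)^(n+1))) {0<..}" for l
    unfolding u_def by (rule has_integral_mult_right[OF exp_moment]) (use c d in simp)
  have gi: "(g N has_integral (\<Sum>l<N. real ((l+k) choose k) * (fact n / ((real l + c)*d)^(n+1)))) {0<..}" for N
    unfolding g_def by (rule has_integral_sum[OF finite_lessThan ui])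
  have ser2: "(\<lambda>l. real ((l+k) choose k) * (fact n / ((real l + c)*d)^(n+1))) sums (fact n / d^(n+1) * Z)"
  proof -
    have "(\<lambda>l. fact n / d^(n+1) * (real ((l+k) choose k) / (real l + real K + a)^(n+1))) sums (fact n / d^(n+1) * Z)"
      by (rule sums_mult[OF ser])
    moreover have "fact n / d^(n+1) * (real ((l+k) choose k) / (real l + real K + a)^(n+1))
        = real ((l+k) choose k) * (fact n / ((real l + c)*d)^(n+1))" for l
      by (simp add: c_def power_mult_distrib add_ac mult_ac)
    ultimately show ?thesis by simp
  qed
  have lim: "(\<lambda>N. integral {0<..} (g N)) \<longlonglongrightarrow> fact n / d^(n+1) * Z"
  proof -
    have "integral {0<..} (g N) = (\<Sum>l<N. real ((l+k) choose k) * (fact n / ((real l + c)*d)^(n+1)))" for N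
      using gi by (rule integral_unique)
    then show ?thesis using ser2 unfolding sums_def by simp
  qed
  have mct: "f integrable_on {0<..} \<and> (\<lambda>N. integral {0<..} (g N)) \<longlonglongrightarrow> integral {0<..} f"
  proof (rule monotone_convergence_increasing)
    show "g N integrable_on {0<..}" for N using gi by blast
    show "g N x \<le> g (Suc N) x" if "x \<in> {0<..}" for N x
      using that unfolding g_def u_def by simp
    show "(\<lambda>N. g N x) \<longlonglongrightarrow> f x" if "x \<in> {0<..}" for x
      using ptw[of x] that unfolding g_def sums_def by simp
    show "bounded (range (\<lambda>N. integral {0<..} (g N)))"
      by (rule convergent_imp_bounded[OF lim])
  qed
  have If: "I = integral {0<..} f" unfolding I_def f_def ..
  have IZ: "I = fact n / d^(n+1) * Z"
    using LIMSEQ_unique[OF conjunct2[OF mct] lim] If by simp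
  have bb: "real k - real m + (s - p) / (r - s) = real K + a - 1"
    unfolding RK a_def using assms by (simp add: field_simps)
  have cc: "real k - real m + (r - p) / (r - s) = real K + a"
    unfolding RK a_def by simp
  have part1: "I = 1 / (r - s) ^ (n + 1) * (fact n / fact k) *
          (\<Sum>i = 0..k. \<Sum>j = 0..k - i. (-1) ^ (k + i) * real ((i + j) choose j)
             * of_int (stirling1_signed k (i + j))
             * (real k - real m + (s - p) / (r - s)) ^ j
             * hurwitz_zeta_real (real (n + 1 - i)) ((r - p) / (r - s)))"
  proof -
    have "(\<Sum>i = 0..k. \<Sum>j = 0..k - i. (-1) ^ (k + i) * real ((i + j) choose j)
             * of_int (stirling1_signed k (i + j))
             * (real k - real m + (s - p) / (r - s)) ^ j
             * hurwitz_zeta_real (real (n + 1 - i)) ((r - p) / (r - s)))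
        = (\<Sum>i\<le>k. Ecoef k (real K + a - 1) i * hurwitz_zeta_real (real (n+1-i)) a)"
      unfolding atLeast0AtMost[of k]
    proof (intro sum.cong refl)
      fix i assume "i \<in> {..k}"
      then have "i \<le> k" by simp
      then show "(\<Sum>j = 0..k - i. (-1) ^ (k + i) * real ((i + j) choose j)
             * of_int (stirling1_signed k (i + j))
             * (real k - real m + (s - p) / (r - s)) ^ j
             * hurwitz_zeta_real (real (n + 1 - i)) ((r - p) / (r - s)))
        = Ecoef k (real K + a - 1) i * hurwitz_zeta_real (real (n+1-i)) a"
        unfolding bb Ecoef_alt[OF \<open>i \<le> k\<close>] a_def[symmetric] by (simp add: sum_distrib_right)
    qed
    then show ?thesis unfolding IZ Z_def d_def by simp
  qed
  have part2: "I = fact n / (r - s) ^ (n + 1) *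
          (\<Sum>i = 0..k. q_coeff (k + 1) i (real k - real m + (r - p) / (r - s))
             * hurwitz_zeta_real (real (n + 1 - i)) ((r - p) / (r - s)))"
  proof -
    have "(\<Sum>i = 0..k. q_coeff (k + 1) i (real k - real m + (r - p) / (r - s))
             * hurwitz_zeta_real (real (n + 1 - i)) ((r - p) / (r - s)))
        = (\<Sum>i\<le>k. Ecoef k (real K + a - 1) i * hurwitz_zeta_real (real (n+1-i)) a) / fact k"
      unfolding atLeast0AtMost[of k] sum_divide_distrib
    proof (intro sum.cong refl)
      fix i assume "i \<in> {..k}"
      then have "i \<le> k" by simp
      then show "q_coeff (k + 1) i (real k - real m + (r - p) / (r - s))
             * hurwitz_zeta_real (real (n + 1 - i)) ((r - p) / (r - s))
          = Ecoef k (real K + a - 1) i * hurwitz_zeta_real (real (n+1-i)) a / fact k"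
        unfolding cc q_alt[OF \<open>i \<le> k\<close>] a_def[symmetric] by (simp add: RK)
    qed
    then show ?thesis unfolding IZ Z_def d_def by simp
  qed
  show ?thesis using mct part1 part2 unfolding f_def by blast
qed

end
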